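(* In any $(m_A,m_B,2,2)$-scenario, every unbiased quantum behavior is a Gram-Lorentz behavior.
   Context: In an $(m_A,m_B,o_A,o_B)$-scenario a behavior is a vector $\mathbf{p}=(p(ab|xy))$ indexed by $a\in[o_A]$, $b\in[o_B]$, $x\in[m_A]$, $y\in[m_B]$ (for $o_A=o_B=2$ the outcomes are labelled $a,b\in\{\pm1\}$). It is quantum if there exist $d\ge1$, a Hermitian positive semidefinite trace-one matrix $\rho$ on $\mathbb{C}^d\otimes\mathbb{C}^d$, and for each $x$ Hermitian psd $d\times d$ matrices $\{M_{a|x}\}_a$ with $\sum_aM_{a|x}=I_d$, and for each $y$ Hermitian psd $d\times d$ matrices $\{N_{b|y}\}_b$ with $\sum_bN_{b|y}=I_d$, such that $p(ab|xy)=\mathrm{Tr}((M_{a|x}\otimes N_{b|y})\rho)$ for all $a,b,x,y$. For quantum behaviors the marginals $p_A(a|x):=\sum_bp(ab|xy)$ and $p_B(b|y):=\sum_ap(ab|xy)$ do not depend on $y$, resp. $x$; in the binary-outcome case $\mathbf{p}$ is unbiased if $p_A(a|x)=p_B(b|y)=1/2$ for all $a,b,x,y$. Let $N:=m_Ao_A+m_Bo_B$ and let $\mathcal{A}(\mathbf{p})$ be the set of real symmetric $N\times N$ matrices $R$ indexed by $([m_A]\times[o_A])\cup([m_B]\times[o_B])$ with $\sum_{a,a'}R_{xa,x'a'}=1$ for all $x,x'\in[m_A]$, $\sum_{a,b}R_{xa,yb}=1$ for all $x\in[m_A],y\in[m_B]$, $\sum_{b,b'}R_{yb,y'b'}=1$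 for all $y,y'\in[m_B]$, and $R_{xa,yb}=p(ab|xy)$ for all $a,b,x,y$. With the Lorentz cone $\mathcal{L}_m:=\{(c,x)\in\mathbb{R}\times\mathbb{R}^{m-1}:c\ge\|x\|\}$, a matrix is Gram-Lorentz if it is the Gram matrix of vectors in some $\mathcal{L}_m$. A quantum behavior $\mathbf{p}$ is a Gram-Lorentz behavior if there exists a Gram-Lorentz matrix $R\in\mathcal{A}(\mathbf{p})$. *)

theory Defs
  imports Complex_Main
begin

definition psd_on :: "'i set \<Rightarrow> ('i \<Rightarrow> 'i \<Rightarrow> complex) \<Rightarrow> bool" where
  "psd_on S A \<longleftrightarrow>
     (\<forall>i\<in>S. \<forall>j\<in>S. A i j = cnj (A j i)) \<and>
     (\<forall>v :: 'i \<Rightarrow> complex. 0 \<le> Re (\<Sum>i\<in>S. \<Sum>j\<in>S. cnj (v i) * A i j * v j))"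

(* Behaviors: p a b x y = p(ab|xy); outcome sets OA, OB; inputs x < mA, y < mB. *)
definition quantum_behavior ::
  "nat \<Rightarrow> nat \<Rightarrow> 'o set \<Rightarrow> 'o set \<Rightarrow> ('o \<Rightarrow> 'o \<Rightarrow> nat \<Rightarrow> nat \<Rightarrow> real) \<Rightarrow> bool" where
  "quantum_behavior mA mB OA OB p \<longleftrightarrow>
     (\<exists>(d::nat) (\<rho> :: nat \<times> nat \<Rightarrow> nat \<times> nat \<Rightarrow> complex)
        (M :: nat \<Rightarrow> 'o \<Rightarrow> nat \<Rightarrow> nat \<Rightarrow> complex)
        (N :: nat \<Rightarrow> 'o \<Rightarrow> nat \<Rightarrow> nat \<Rightarrow> complex).
        d \<ge> 1 \<and>
        psd_on ({..<d} \<times> {..<d}) \<rho> \<and>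
        (\<Sum>ik\<in>{..<d} \<times> {..<d}. \<rho> ik ik) = 1 \<and>
        (\<forall>x<mA. (\<forall>a\<in>OA. psd_on {..<d} (M x a)) \<and>
                 (\<forall>i<d. \<forall>j<d. (\<Sum>a\<in>OA. M x a i j) = (if i = j then 1 else 0))) \<and>
        (\<forall>y<mB. (\<forall>b\<in>OB. psd_on {..<d} (N y b)) \<and>
                 (\<forall>i<d. \<forall>j<d. (\<Sum>b\<in>OB. N y b i j) = (if i = j then 1 else 0))) \<and>
        (\<forall>a\<in>OA. \<forall>b\<in>OB. \<forall>x<mA. \<forall>y<mB.
           complex_of_real (p a b x y) =
             (\<Sum>ik\<in>{..<d} \<times> {..<d}. \<Sum>jl\<in>{..<d} \<times> {..<d}.
                M x a (fst ik) (fst jl) * N y b (snd ik) (snd jl) * \<rho> jl ik)))"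

abbreviation pm1 :: "int set" where "pm1 \<equiv> {-1, 1}"

definition unbiased :: "nat \<Rightarrow> nat \<Rightarrow> (int \<Rightarrow> int \<Rightarrow> nat \<Rightarrow> nat \<Rightarrow> real) \<Rightarrow> bool" where
  "unbiased mA mB p \<longleftrightarrow>
     (\<forall>x<mA. \<forall>y<mB. \<forall>a\<in>pm1. (\<Sum>b\<in>pm1. p a b x y) = 1/2) \<and>
     (\<forall>x<mA. \<forall>y<mB. \<forall>b\<in>pm1. (\<Sum>a\<in>pm1. p a b x y) = 1/2)"

(* Index set ([mA] x OA) \<union> ([mB] x OB), as a disjoint union: Inl (x,a) / Inr (y,b). *)
definition idx_set :: "nat \<Rightarrow> nat \<Rightarrow> 'o set \<Rightarrow> 'o set \<Rightarrow> ((nat \<times> 'o) + (nat \<times> 'o)) set" where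
  "idx_set mA mB OA OB = Inl ` ({..<mA} \<times> OA) \<union> Inr ` ({..<mB} \<times> OB)"

definition in_A ::
  "nat \<Rightarrow> nat \<Rightarrow> 'o set \<Rightarrow> 'o set \<Rightarrow> ('o \<Rightarrow> 'o \<Rightarrow> nat \<Rightarrow> nat \<Rightarrow> real)
   \<Rightarrow> ((nat \<times> 'o) + (nat \<times> 'o) \<Rightarrow> (nat \<times> 'o) + (nat \<times> 'o) \<Rightarrow> real) \<Rightarrow> bool" where
  "in_A mA mB OA OB p R \<longleftrightarrow>
     (\<forall>i\<in>idx_set mA mB OA OB. \<forall>j\<in>idx_set mA mB OA OB. R i j = R j i) \<and>
     (\<forall>x<mA. \<forall>x'<mA. (\<Sum>a\<in>OA. \<Sum>a'\<in>OA. R (Inl (x,a)) (Inl (x',a'))) = 1) \<and>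
     (\<forall>x<mA. \<forall>y<mB. (\<Sum>a\<in>OA. \<Sum>b\<in>OB. R (Inl (x,a)) (Inr (y,b))) = 1) \<and>
     (\<forall>y<mB. \<forall>y'<mB. (\<Sum>b\<in>OB. \<Sum>b'\<in>OB. R (Inr (y,b)) (Inr (y',b'))) = 1) \<and>
     (\<forall>a\<in>OA. \<forall>b\<in>OB. \<forall>x<mA. \<forall>y<mB. R (Inl (x,a)) (Inr (y,b)) = p a b x y)"

(* Lorentz cone L_m = {(c,x) \<in> \<real> \<times> \<real>^(m-1). c \<ge> ||x||}; a vector of \<real>^m is
   represented by its coordinates u 0, ..., u (m-1). *)
definition lorentz_cone :: "nat \<Rightarrow> (nat \<Rightarrow> real) set" where
  "lorentz_cone m = {u. sqrt (\<Sum>k\<in>{1..<m}. (u k)\<^sup>2) \<le> u 0}"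

definition gram_lorentz :: "'i set \<Rightarrow> ('i \<Rightarrow> 'i \<Rightarrow> real) \<Rightarrow> bool" where
  "gram_lorentz S R \<longleftrightarrow>
     (\<exists>(m::nat) (v :: 'i \<Rightarrow> nat \<Rightarrow> real). m \<ge> 1 \<and>
        (\<forall>i\<in>S. v i \<in> lorentz_cone m) \<and>
        (\<forall>i\<in>S. \<forall>j\<in>S. R i j = (\<Sum>k<m. v i k * v j k)))"

definition gram_lorentz_behavior ::
  "nat \<Rightarrow> nat \<Rightarrow> 'o set \<Rightarrow> 'o set \<Rightarrow> ('o \<Rightarrow> 'o \<Rightarrow> nat \<Rightarrow> nat \<Rightarrow> real) \<Rightarrow> bool" where
  "gram_lorentz_behavior mA mB OA OB p \<longleftrightarrow>
     quantum_behavior mA mB OA OB p \<and>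
     (\<exists>R. gram_lorentz (idx_set mA mB OA OB) R \<and> in_A mA mB OA OB p R)"

end

theory Submission
  imports Defs
begin
definition Qf :: "'i set \<Rightarrow> ('i \<Rightarrow> 'i \<Rightarrow> complex) \<Rightarrow> ('i \<Rightarrow> complex) \<Rightarrow> complex" where
  "Qf S A v = (\<Sum>i\<in>S. \<Sum>j\<in>S. cnj (v i) * A i j * v j)"

lemma Qf_sub:
  assumes "finite T" "U \<subseteq> T" "\<forall>i\<in>T-U. v i = 0"
  shows "Qf T A v = Qf U A v"
proof -
  have "(\<Sum>i\<in>T. \<Sum>j\<in>T. cnj (v i) * A i j * v j) = (\<Sum>i\<in>U. \<Sum>j\<in>T. cnj (v i) * A i j * v j)"
    by (rule sum.mono_neutral_right) (use assms in auto)
  also have "\<dots> = (\<Sum>i\<in>U. \<Sum>j\<in>U. cnj (v i) * A i j * v j)"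
    by (rule sum.cong[OF refl], rule sum.mono_neutral_right) (use assms in auto)
  finally show ?thesis unfolding Qf_def .
qed

lemma Qf_delta2:
  assumes "finite T" "a \<in> T" "s \<in> T" "a \<noteq> s"
  shows "Qf T A (\<lambda>i. if i = a then x else if i = s then y else 0)
       = cnj x * A a a * x + cnj x * A a s * y + cnj y * A s a * x + cnj y * A s s * y"
  using assms by (subst Qf_sub[where U="{a,s}"]) (auto simp: Qf_def)

lemma Qf_delta1:
  assumes "finite T" "s \<in> T"
  shows "Qf T A (\<lambda>i. if i = s then 1 else 0) = A s s"
  using assms by (subst Qf_sub[where U="{s}"]) (auto simp: Qf_def)

lemma psd_Q: "psd_on S A \<Longrightarrow> 0 \<le> Re (Qf S A v)"
  unfolding psd_on_def Qf_def by blast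

lemma psd_herm: "psd_on S A \<Longrightarrow> i \<in> S \<Longrightarrow> j \<in> S \<Longrightarrow> A i j = cnj (A j i)"
  unfolding psd_on_def by blast

lemma psd_diag:
  assumes "psd_on T A" "finite T" "s \<in> T"
  shows "A s s = complex_of_real (Re (A s s))" "0 \<le> Re (A s s)"
proof -
  have "A s s = cnj (A s s)" using psd_herm[OF assms(1,3,3)] .
  then show "A s s = complex_of_real (Re (A s s))"
    by (simp add: complex_eq_iff)
  show "0 \<le> Re (A s s)" using psd_Q[OF assms(1), of "\<lambda>i. if i = s then 1 else 0"]
    Qf_delta1[OF assms(2,3)] by simp
qed

lemma psd_zero:
  assumes "psd_on T A" "finite T" "a \<in> T" "s \<in> T" "a \<noteq> s" "A s s = 0"
  shows "A a s = 0"
proof (rule ccontr)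
  let ?c = "A a s"
  assume c: "?c \<noteq> 0"
  have asa: "A s a = cnj ?c" using psd_herm[OF assms(1,4,3)] .
  define t where "t = (Re (A a a) + 1) / (2 * (cmod ?c)^2)"
  have pos: "(cmod ?c)^2 > 0" using c by simp
  have "0 \<le> Re (Qf T A (\<lambda>i. if i = a then 1 else if i = s then - of_real t * cnj ?c else 0))"
    by (rule psd_Q[OF assms(1)])
  also have "Qf T A (\<lambda>i. if i = a then 1 else if i = s then - of_real t * cnj ?c else 0)
     = A a a - 2 * of_real t * (?c * cnj ?c)"
    using Qf_delta2[OF assms(2,3,4,5)] asa assms(6) by (simp add: algebra_simps)
  also have "?c * cnj ?c = of_real ((cmod ?c)^2)" using complex_norm_square[of ?c] by simp
  finally have "0 \<le> Re (A a a) - 2 * t * (cmod ?c)^2" by simp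
  also have "2 * t * (cmod ?c)^2 = Re (A a a) + 1" unfolding t_def using pos by (simp add: field_simps)
  finally show False by simp
qed

lemma Qf_cong: "(\<And>i. i \<in> S \<Longrightarrow> v i = v' i) \<Longrightarrow> Qf S A v = Qf S A v'"
  unfolding Qf_def by (rule sum.cong) (auto intro!: sum.cong)

lemma Qf_insert:
  assumes "finite S" "s \<notin> S"
  shows "Qf (insert s S) A v = cnj (v s) * A s s * v s + cnj (v s) * (\<Sum>b\<in>S. A s b * v b)
      + (\<Sum>a\<in>S. cnj (v a) * A a s) * v s + Qf S A v"
  using assms unfolding Qf_def
  by (simp add: sum.distrib sum_distrib_left sum_distrib_right algebra_simps)

lemma Qf_rank1:
  "Qf S (\<lambda>a b. A a b - w a * cnj (w b)) v = Qf S A v - (\<Sum>a\<in>S. cnj (v a) * w a) * (\<Sum>b\<in>S. cnj (w b) * v b)"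
  unfolding Qf_def sum_product
  by (simp add: algebra_simps sum_subtractf)

lemma psd_factor:
  "finite S \<Longrightarrow> psd_on S A \<Longrightarrow> \<exists>(m::nat) W. \<forall>a\<in>S. \<forall>b\<in>S. A a b = (\<Sum>k<m. W a k * cnj (W b k))"
proof (induction S arbitrary: A rule: finite_induct)
  case empty
  then show ?case by auto
next
  case (insert s S)
  let ?T = "insert s S"
  have fT: "finite ?T" using insert by simp
  define \<alpha> where "\<alpha> = Re (A s s)"
  have Ass: "A s s = of_real \<alpha>" "\<alpha> \<ge> 0" using psd_diag[OF insert(4) fT] \<alpha>_def by auto
  define r where "r = sqrt \<alpha>"
  have r2: "r * r = \<alpha>" "r \<ge> 0" unfolding r_def using Ass by auto
  define w where "w a = (if \<alpha> > 0 then A a s / of_real r else 0)" for a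
  define B where "B a b = A a b - w a * cnj (w b)" for a b
  have herm: "A a b = cnj (A b a)" if "a \<in> ?T" "b \<in> ?T" for a b
    using psd_herm[OF insert(4) that] .
  have key: "A a b = w a * cnj (w b)" if "a \<in> ?T" "b \<in> ?T" "a = s \<or> b = s" for a b
  proof (cases "\<alpha> > 0")
    case True
    have rpos: "r > 0" using True r2 by (metis mult_eq_0_iff order_le_less)
    have ws: "w s = of_real r" unfolding w_def using True Ass rpos r2
      by (simp add: field_simps) (metis of_real_mult)
    show ?thesis
    proof (cases "b = s")
      case True
      then show ?thesis using ws rpos unfolding w_def using `\<alpha> > 0` by simp
    next
      case False
      then have "a = s" using that by auto
      then show ?thesis using ws rpos herm[OF that(2,1)] herm[OF that(1,2)] `\<alpha> > 0` unfolding w_def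
        by (simp add: field_simps)
    qed
  next
    case False
    then have a0: "A s s = 0" using Ass by auto
    have z: "A c s = 0" if "c \<in> ?T" for c
      using psd_zero[OF insert(4) fT that, of s] a0 by (cases "c = s") auto
    have w0: "w c = 0" for c unfolding w_def using False by simp
    show ?thesis using that z herm[OF that(1,2)] w0 by auto
  qed
  have psdB: "psd_on S B"
    unfolding psd_on_def
  proof (intro conjI ballI allI)
    fix i j assume "i \<in> S" "j \<in> S"
    then have "A i j = cnj (A j i)" using herm[of i j] by simp
    then show "B i j = cnj (B j i)" unfolding B_def by simp
  next
    fix v :: "'a \<Rightarrow> complex"
    have QB: "Qf S B v = Qf S A v - (\<Sum>a\<in>S. cnj (v a) * w a) * (\<Sum>b\<in>S. cnj (w b) * v b)"
      unfolding B_def by (rule Qf_rank1)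
    have "\<exists>v'. Qf S B v = Qf ?T A v'"
    proof (cases "\<alpha> > 0")
      case False
      have w0: "w c = 0" for c unfolding w_def using False by simp
      have "Qf ?T A (v(s := 0)) = Qf S A (v(s:=0))"
        by (rule Qf_sub) (use insert in auto)
      also have "\<dots> = Qf S A v" by (rule Qf_cong) (use insert in auto)
      finally have e: "Qf ?T A (v(s := 0)) = Qf S A v" .
      have "Qf S B v = Qf S A v" using QB w0 by simp
      then show ?thesis using e by (intro exI[of _ "v(s := 0)"]) simp
    next
      case True
      have rpos: "r > 0" using True r2 by (metis mult_eq_0_iff order_le_less)
      define t where "t = (\<Sum>b\<in>S. A s b * v b)"
      define v' where "v' = v(s := - t / of_real \<alpha>)"
      have s1: "(\<Sum>b\<in>S. A s b * v' b) = t" unfolding t_def v'_def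
        by (rule sum.cong) (use insert in auto)
      have hs: "A a s = cnj (A s a)" if "a \<in> S" for a using herm[of a s] that by simp
      have s2': "(\<Sum>a\<in>S. cnj (v a) * A a s) = cnj t" unfolding t_def cnj_sum
        by (rule sum.cong) (simp_all add: hs)
      have s2: "(\<Sum>a\<in>S. cnj (v' a) * A a s) = cnj t" unfolding s2'[symmetric] v'_def
        by (rule sum.cong) (use insert in auto)
      have s3: "Qf S A v' = Qf S A v" by (rule Qf_cong) (use insert v'_def in auto)
      have s4: "(\<Sum>a\<in>S. cnj (v a) * w a) = cnj t / of_real r"
        unfolding w_def s2'[symmetric] using True
        by (simp add: sum_divide_distrib)
      have s5: "(\<Sum>b\<in>S. cnj (w b) * v b) = t / of_real r"
        unfolding w_def t_def using True
        by (simp add: sum_divide_distrib hs)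
      have "Qf ?T A v' = cnj (v' s) * A s s * v' s + cnj (v' s) * t + cnj t * v' s + Qf S A v"
        using Qf_insert[OF insert(1,2), of A v'] s1 s2 s3 by simp
      also have "\<dots> = Qf S A v - cnj t * t / of_real \<alpha>"
      proof -
        have an: "complex_of_real \<alpha> \<noteq> 0" using True by simp
        have c1: "v' s = - t / of_real \<alpha>" "cnj (v' s) = - cnj t / of_real \<alpha>"
          unfolding v'_def by simp_all
        have e1: "cnj (v' s) * A s s * v' s = cnj t * t / of_real \<alpha>"
          unfolding c1 Ass using an by (simp add: field_simps)
        have e2: "cnj (v' s) * t = - (cnj t * t / of_real \<alpha>)" "cnj t * v' s = - (cnj t * t / of_real \<alpha>)"
          unfolding c1 by (simp_all add: field_simps)
        show ?thesis unfolding e1 e2 by simp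
      qed
      also have "\<dots> = Qf S B v" unfolding QB s4 s5
      proof -
        have "cnj t / of_real r * (t / of_real r) = cnj t * t / (of_real r * of_real r)" by simp
        also have "of_real r * of_real r = (of_real \<alpha> :: complex)" using r2 by (metis of_real_mult)
        finally show "Qf S A v - cnj t * t / of_real \<alpha> = Qf S A v - cnj t / of_real r * (t / of_real r)" by (metis)
      qed
      finally show ?thesis by metis
    qed
    then obtain v' where "Qf S B v = Qf ?T A v'" by blast
    then show "0 \<le> Re (\<Sum>i\<in>S. \<Sum>j\<in>S. cnj (v i) * B i j * v j)"
      using psd_Q[OF insert(4), of v'] unfolding Qf_def by simp
  qed
  obtain m :: nat and W' where W': "\<forall>a\<in>S. \<forall>b\<in>S. B a b = (\<Sum>k<m. W' a k * cnj (W' b k))"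
    using insert(3)[OF psdB] by blast
  define W where "W a k = (if k = m then w a else if a = s then 0 else W' a k)" for a k
  have "\<forall>a\<in>?T. \<forall>b\<in>?T. A a b = (\<Sum>k<Suc m. W a k * cnj (W b k))"
  proof (intro ballI)
    fix a b assume ab: "a \<in> ?T" "b \<in> ?T"
    have "(\<Sum>k<Suc m. W a k * cnj (W b k)) = (\<Sum>k<m. W a k * cnj (W b k)) + w a * cnj (w b)"
      unfolding W_def by simp
    also have "(\<Sum>k<m. W a k * cnj (W b k)) = (if a = s \<or> b = s then 0 else B a b)"
    proof (cases "a = s \<or> b = s")
      case True
      then show ?thesis unfolding W_def by (auto intro!: sum.neutral)
    next
      case False
      then show ?thesis using W' ab unfolding W_def by auto
    qed
    finally show "A a b = (\<Sum>k<Suc m. W a k * cnj (W b k))"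
      using key[OF ab] unfolding B_def by auto
  qed
  then show ?case by blast
qed

definition mv :: "'i set \<Rightarrow> ('i \<Rightarrow> 'i \<Rightarrow> complex) \<Rightarrow> ('i \<Rightarrow> complex) \<Rightarrow> 'i \<Rightarrow> complex" where
  "mv D P u i = (\<Sum>j\<in>D. P i j * u j)"
definition ip :: "'i set \<Rightarrow> ('i \<Rightarrow> complex) \<Rightarrow> ('i \<Rightarrow> complex) \<Rightarrow> complex" where
  "ip D u w = (\<Sum>i\<in>D. cnj (u i) * w i)"

lemma Qf_ip: "Qf D P u = ip D u (mv D P u)"
  unfolding Qf_def ip_def mv_def by (simp add: sum_distrib_left mult.assoc)

lemma ip_herm:
  assumes "\<And>i j. i \<in> D \<Longrightarrow> j \<in> D \<Longrightarrow> P i j = cnj (P j i)"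
  shows "ip D (mv D P u) w = ip D u (mv D P w)"
proof -
  have hc: "\<And>i j. i \<in> D \<Longrightarrow> j \<in> D \<Longrightarrow> cnj (P i j) = P j i" by (metis assms complex_cnj_cnj)
  have "ip D (mv D P u) w = (\<Sum>i\<in>D. \<Sum>j\<in>D. cnj (u j) * P j i * w i)"
    unfolding ip_def mv_def cnj_sum sum_distrib_right
    by (intro sum.cong refl) (simp add: hc mult.assoc mult.left_commute)
  also have "\<dots> = (\<Sum>j\<in>D. \<Sum>i\<in>D. cnj (u j) * P j i * w i)" by (rule sum.swap)
  also have "\<dots> = ip D u (mv D P w)"
    unfolding ip_def mv_def by (simp add: sum_distrib_left mult.assoc)
  finally show ?thesis .
qed

lemma ip_cong: "(\<And>i. i \<in> D \<Longrightarrow> w i = w' i) \<Longrightarrow> ip D u w = ip D u w'"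
  unfolding ip_def by simp

lemma mv_cong: "(\<And>i. i \<in> D \<Longrightarrow> w i = w' i) \<Longrightarrow> mv D P w i = mv D P w' i"
  unfolding mv_def by simp

lemma ip_add: "ip D u (\<lambda>i. w i + w' i) = ip D u w + ip D u w'"
  unfolding ip_def by (simp add: distrib_left sum.distrib)

lemma mv_add: "mv D P (\<lambda>i. w i + w' i) i = mv D P w i + mv D P w' i"
  unfolding mv_def by (simp add: distrib_left sum.distrib)

lemma mv_diff: "mv D P (\<lambda>i. w i - w' i) i = mv D P w i - mv D P w' i"
  unfolding mv_def by (simp add: right_diff_distrib sum_subtractf)

lemma contraction:
  fixes D :: "'i set"
  assumes fin: "finite D" and p1: "psd_on D M1" and p2: "psd_on D M2"
    and id: "\<And>i j. i \<in> D \<Longrightarrow> j \<in> D \<Longrightarrow> M1 i j + M2 i j = (if i = j then 1 else 0)"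
  shows "(\<Sum>i\<in>D. (cmod (\<Sum>j\<in>D. (M1 i j - M2 i j) * u j))^2) \<le> (\<Sum>i\<in>D. (cmod (u i))^2)"
proof -
  define a where "a = mv D M1 u"
  define b where "b = mv D M2 u"
  have uab: "u i = a i + b i" if "i \<in> D" for i
  proof -
    have "a i + b i = (\<Sum>j\<in>D. (M1 i j + M2 i j) * u j)"
      unfolding a_def b_def mv_def by (simp add: distrib_right sum.distrib)
    also have "\<dots> = (\<Sum>j\<in>D. (if i = j then u j else 0))"
      by (rule sum.cong) (use id that in auto)
    also have "\<dots> = u i" using fin that by simp
    finally show ?thesis by simp
  qed
  have Aab: "(\<Sum>j\<in>D. (M1 i j - M2 i j) * u j) = a i - b i" for i
    unfolding a_def b_def mv_def by (simp add: left_diff_distrib sum_subtractf)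
  have idv: "mv D M1 w i = w i - mv D M2 w i" if "i \<in> D" for w i
  proof -
    have "mv D M1 w i + mv D M2 w i = (\<Sum>j\<in>D. (M1 i j + M2 i j) * w j)"
      unfolding mv_def by (simp add: distrib_right sum.distrib)
    also have "\<dots> = (\<Sum>j\<in>D. (if i = j then w j else 0))"
      by (rule sum.cong) (use id that in auto)
    also have "\<dots> = w i" using fin that by simp
    finally show ?thesis by (simp add: algebra_simps)
  qed
  have h1: "\<And>i j. i \<in> D \<Longrightarrow> j \<in> D \<Longrightarrow> M1 i j = cnj (M1 j i)" using psd_herm[OF p1] by blast
  have h2: "\<And>i j. i \<in> D \<Longrightarrow> j \<in> D \<Longrightarrow> M2 i j = cnj (M2 j i)" using psd_herm[OF p2] by blast
  have bb: "b i = mv D M2 a i + mv D M2 b i" for i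
  proof -
    have "b i = mv D M2 u i" by (simp add: b_def)
    also have "\<dots> = mv D M2 (\<lambda>j. a j + b j) i" by (rule mv_cong) (simp add: uab)
    also have "\<dots> = mv D M2 a i + mv D M2 b i" by (rule mv_add)
    finally show ?thesis .
  qed
  have comm: "mv D M2 a i = mv D M1 b i" if "i \<in> D" for i
  proof -
    have "mv D M2 a i = mv D M2 (\<lambda>j. u j - b j) i" by (rule mv_cong) (simp add: uab)
    also have "\<dots> = b i - mv D M2 b i" unfolding mv_diff b_def ..
    also have "\<dots> = mv D M1 b i" using idv[OF that, of b] by simp
    finally show ?thesis .
  qed
  have "ip D a b = ip D a (mv D M2 a) + ip D a (mv D M2 b)"
    unfolding ip_add[symmetric] by (rule ip_cong) (simp add: bb)
  also have "ip D a (mv D M2 b) = ip D (mv D M2 a) b" by (rule ip_herm[OF h2, symmetric])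
  also have "\<dots> = ip D (mv D M1 b) b" unfolding ip_def by (rule sum.cong) (simp_all add: comm)
  also have "\<dots> = ip D b (mv D M1 b)" by (rule ip_herm[OF h1])
  finally have "ip D a b = Qf D M2 a + Qf D M1 b" by (simp add: Qf_ip)
  then have nn: "0 \<le> Re (ip D a b)" using psd_Q[OF p1, of b] psd_Q[OF p2, of a] by simp
  have pt: "(cmod (x + y))^2 = (cmod (x - y))^2 + 4 * Re (cnj x * y)" for x y :: complex
    unfolding cmod_power2 by (simp add: power2_eq_square algebra_simps)
  have "(\<Sum>i\<in>D. (cmod (u i))^2) = (\<Sum>i\<in>D. (cmod (a i - b i))^2 + 4 * Re (cnj (a i) * b i))"
    by (rule sum.cong) (simp_all add: uab pt)
  also have "\<dots> = (\<Sum>i\<in>D. (cmod (a i - b i))^2) + 4 * Re (ip D a b)"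
    unfolding ip_def by (simp add: sum.distrib sum_distrib_left)
  finally show ?thesis unfolding Aab using nn by simp
qed

definition rl :: "('a \<Rightarrow> complex) \<Rightarrow> 'a \<times> bool \<Rightarrow> real" where
  "rl f t = (if snd t then Re (f (fst t)) else Im (f (fst t)))"

lemma rl_sum:
  assumes "finite P"
  shows "(\<Sum>t\<in>P \<times> UNIV. rl f t * rl g t) = Re (\<Sum>c\<in>P. cnj (f c) * g c)"
proof -
  have "(\<Sum>t\<in>P \<times> UNIV. rl f t * rl g t) = (\<Sum>c\<in>P. \<Sum>b\<in>UNIV. rl f (c,b) * rl g (c,b))"
    by (simp add: sum.cartesian_product)
  also have "\<dots> = (\<Sum>c\<in>P. Re (cnj (f c) * g c))"
    by (rule sum.cong) (simp_all add: UNIV_bool rl_def)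
  finally show ?thesis by simp
qed

lemma gram_construct:
  fixes g :: "'i \<Rightarrow> 'c \<Rightarrow> complex" and \<sigma> :: "'i \<Rightarrow> real"
  assumes fin: "finite P" and sig: "\<And>i. i \<in> I \<Longrightarrow> \<sigma> i * \<sigma> i = 1"
    and nrm: "\<And>i. i \<in> I \<Longrightarrow> Re (\<Sum>c\<in>P. cnj (g i c) * g i c) \<le> 1"
  shows "\<exists>m V. m \<ge> 1 \<and> (\<forall>i\<in>I. V i \<in> lorentz_cone m) \<and>
     (\<forall>i\<in>I. \<forall>j\<in>I. (\<Sum>k<m. V i k * V j k) = 1/4 + \<sigma> i * \<sigma> j / 4 * Re (\<Sum>c\<in>P. cnj (g i c) * g j c))"
proof -
  let ?T = "P \<times> (UNIV :: bool set)"
  have fT: "finite ?T" using fin by simp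
  obtain h where h: "bij_betw h {0..<card ?T} ?T" using ex_bij_betw_nat_finite[OF fT] by blast
  define n where "n = card ?T"
  define V where "V i k = (if k = 0 then 1/2 else \<sigma> i / 2 * rl (g i) (h (k - 1)))" for i k
  have reidx: "(\<Sum>k<n. F (h k)) = (\<Sum>t\<in>?T. F t)" for F :: "_ \<Rightarrow> real"
    using sum.reindex_bij_betw[OF h, of F] unfolding n_def by (simp add: atLeast0LessThan)
  have gram: "(\<Sum>k<Suc n. V i k * V j k) = 1/4 + \<sigma> i * \<sigma> j / 4 * Re (\<Sum>c\<in>P. cnj (g i c) * g j c)" for i j
  proof -
    have "(\<Sum>k<Suc n. V i k * V j k) = 1/4 + (\<Sum>k<n. V i (Suc k) * V j (Suc k))"
      unfolding sum.lessThan_Suc_shift by (simp add: V_def)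
    also have "(\<Sum>k<n. V i (Suc k) * V j (Suc k)) = \<sigma> i * \<sigma> j / 4 * (\<Sum>k<n. rl (g i) (h k) * rl (g j) (h k))"
      unfolding V_def by (simp add: sum_distrib_left algebra_simps)
    also have "(\<Sum>k<n. rl (g i) (h k) * rl (g j) (h k)) = Re (\<Sum>c\<in>P. cnj (g i c) * g j c)"
      using reidx[of "\<lambda>t. rl (g i) t * rl (g j) t"] rl_sum[OF fin] by simp
    finally show ?thesis .
  qed
  have lor: "V i \<in> lorentz_cone (Suc n)" if "i \<in> I" for i
  proof -
    have "(\<Sum>k\<in>{1..<Suc n}. (V i k)\<^sup>2) = (\<Sum>k<n. (V i (Suc k))\<^sup>2)"
      unfolding One_nat_def sum.shift_bounds_Suc_ivl by (simp add: atLeast0LessThan)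
    also have "\<dots> = (\<sigma> i * \<sigma> i) / 4 * (\<Sum>k<n. rl (g i) (h k) * rl (g i) (h k))"
      unfolding V_def by (simp add: sum_distrib_left power2_eq_square algebra_simps)
    also have "\<dots> = 1/4 * Re (\<Sum>c\<in>P. cnj (g i c) * g i c)"
      using reidx[of "\<lambda>t. rl (g i) t * rl (g i) t"] rl_sum[OF fin] sig[OF that] by simp
    also have "\<dots> \<le> (1/2)\<^sup>2" using nrm[OF that] by (simp add: power2_eq_square)
    finally have "sqrt (\<Sum>k\<in>{1..<Suc n}. (V i k)\<^sup>2) \<le> sqrt ((1/2)\<^sup>2)"
      by (rule real_sqrt_le_mono)
    then have "sqrt (\<Sum>k\<in>{1..<Suc n}. (V i k)\<^sup>2) \<le> 1/2" by simp
    moreover have "V i 0 = 1/2" by (simp add: V_def)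
    ultimately show ?thesis unfolding lorentz_cone_def by simp
  qed
  show ?thesis
    by (rule exI[of _ "Suc n"], rule exI[of _ V]) (use gram lor in auto)
qed

lemma sum_pair: "(\<Sum>t\<in>A \<times> B. F t) = (\<Sum>x\<in>A. \<Sum>y\<in>B. F (x,y))"
  by (simp add: sum.cartesian_product)

lemma swap3: "(\<Sum>i\<in>A. \<Sum>k\<in>B. \<Sum>j\<in>C. F i k j) = (\<Sum>j\<in>C. \<Sum>k\<in>B. \<Sum>i\<in>A. F i k j)"
proof -
  have "(\<Sum>i\<in>A. \<Sum>k\<in>B. \<Sum>j\<in>C. F i k j) = (\<Sum>i\<in>A. \<Sum>j\<in>C. \<Sum>k\<in>B. F i k j)"
    by (rule sum.cong[OF refl], rule sum.swap)
  also have "\<dots> = (\<Sum>j\<in>C. \<Sum>i\<in>A. \<Sum>k\<in>B. F i k j)" by (rule sum.swap)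
  also have "\<dots> = (\<Sum>j\<in>C. \<Sum>k\<in>B. \<Sum>i\<in>A. F i k j)"
    by (rule sum.cong[OF refl], rule sum.swap)
  finally show ?thesis .
qed

definition ua :: "nat \<Rightarrow> (nat \<Rightarrow> nat \<Rightarrow> complex) \<Rightarrow> (nat \<times> nat \<Rightarrow> nat \<Rightarrow> complex) \<Rightarrow> nat \<times> nat \<times> nat \<Rightarrow> complex" where
  "ua d A W c = (case c of (r, i, l) \<Rightarrow> \<Sum>j<d. A i j * W (j, l) r)"
definition vb :: "nat \<Rightarrow> (nat \<Rightarrow> nat \<Rightarrow> complex) \<Rightarrow> (nat \<times> nat \<Rightarrow> nat \<Rightarrow> complex) \<Rightarrow> nat \<times> nat \<times> nat \<Rightarrow> complex" where
  "vb d B W c = (case c of (r, i, l) \<Rightarrow> \<Sum>l'<d. B l l' * W (i, l') r)"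

lemma corr:
  fixes W :: "nat \<times> nat \<Rightarrow> nat \<Rightarrow> complex" and m d :: nat
  assumes rho: "\<forall>a\<in>{..<d} \<times> {..<d}. \<forall>b\<in>{..<d} \<times> {..<d}. \<rho> a b = (\<Sum>r<m. W a r * cnj (W b r))"
    and herm: "\<And>i j. i < d \<Longrightarrow> j < d \<Longrightarrow> A i j = cnj (A j i)"
  shows "(\<Sum>ik\<in>{..<d} \<times> {..<d}. \<Sum>jl\<in>{..<d} \<times> {..<d}. A (fst ik) (fst jl) * B (snd ik) (snd jl) * \<rho> jl ik)
       = (\<Sum>c\<in>{..<m} \<times> ({..<d} \<times> {..<d}). cnj (ua d A W c) * vb d B W c)"
proof -
  have hc: "\<And>i j. i < d \<Longrightarrow> j < d \<Longrightarrow> cnj (A j i) = A i j" using herm by (metis complex_cnj_cnj)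
  have "(\<Sum>ik\<in>{..<d} \<times> {..<d}. \<Sum>jl\<in>{..<d} \<times> {..<d}. A (fst ik) (fst jl) * B (snd ik) (snd jl) * \<rho> jl ik)
    = (\<Sum>i<d. \<Sum>k<d. \<Sum>j<d. \<Sum>l<d. \<Sum>r<m. A i j * B k l * (W (j,l) r * cnj (W (i,k) r)))"
    unfolding sum_pair by (intro sum.cong refl) (simp add: rho sum_distrib_left)
  also have "\<dots> = (\<Sum>r<m. \<Sum>i<d. \<Sum>k<d. \<Sum>j<d. \<Sum>l<d. A i j * B k l * (W (j,l) r * cnj (W (i,k) r)))"
    by (simp only: sum.swap[where B="{..<m}"])
  also have "\<dots> = (\<Sum>r<m. \<Sum>j<d. \<Sum>k<d. \<Sum>i<d. \<Sum>l<d. A i j * B k l * (W (j,l) r * cnj (W (i,k) r)))"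
    by (rule sum.cong[OF refl], rule swap3)
  also have "\<dots> = (\<Sum>c\<in>{..<m} \<times> ({..<d} \<times> {..<d}). cnj (ua d A W c) * vb d B W c)"
    unfolding sum_pair ua_def vb_def
    by (intro sum.cong refl) (simp add: sum_distrib_left sum_distrib_right hc algebra_simps)
  finally show ?thesis .
qed

lemma re_sum_sq: "Re (\<Sum>c\<in>P. cnj (z c) * z c) = (\<Sum>c\<in>P. (cmod (z c))^2)"
proof -
  have "cnj (z c) * z c = of_real ((cmod (z c))^2)" for c
    using complex_norm_square[of "z c"] by (simp add: mult.commute)
  then show ?thesis by simp
qed

lemma norm_ua:
  assumes p1: "psd_on {..<d} M1" and p2: "psd_on {..<d} M2"
    and id: "\<And>i j. i < d \<Longrightarrow> j < d \<Longrightarrow> M1 i j + M2 i j = (if i = j then 1 else 0)"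
  shows "Re (\<Sum>c\<in>{..<m} \<times> ({..<d} \<times> {..<d}). cnj (ua d (\<lambda>i j. M1 i j - M2 i j) W c) * ua d (\<lambda>i j. M1 i j - M2 i j) W c)
     \<le> (\<Sum>r<m. \<Sum>c\<in>{..<d} \<times> {..<d}. (cmod (W c r))^2)"
proof -
  have "Re (\<Sum>c\<in>{..<m} \<times> ({..<d} \<times> {..<d}). cnj (ua d (\<lambda>i j. M1 i j - M2 i j) W c) * ua d (\<lambda>i j. M1 i j - M2 i j) W c)
    = (\<Sum>r<m. \<Sum>i<d. \<Sum>l<d. (cmod (\<Sum>j<d. (M1 i j - M2 i j) * W (j, l) r))^2)"
    unfolding re_sum_sq unfolding sum_pair ua_def by (simp only: prod.case)
  also have "\<dots> = (\<Sum>r<m. \<Sum>l<d. \<Sum>i<d. (cmod (\<Sum>j<d. (M1 i j - M2 i j) * W (j, l) r))^2)"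
    by (rule sum.cong[OF refl], rule sum.swap)
  also have "\<dots> \<le> (\<Sum>r<m. \<Sum>l<d. \<Sum>i<d. (cmod (W (i, l) r))^2)"
    by (intro sum_mono contraction[OF _ p1 p2]) (auto simp: id)
  also have "\<dots> = (\<Sum>r<m. \<Sum>c\<in>{..<d} \<times> {..<d}. (cmod (W c r))^2)"
    unfolding sum_pair by (rule sum.cong[OF refl], rule sum.swap)
  finally show ?thesis .
qed

lemma norm_vb:
  assumes p1: "psd_on {..<d} M1" and p2: "psd_on {..<d} M2"
    and id: "\<And>i j. i < d \<Longrightarrow> j < d \<Longrightarrow> M1 i j + M2 i j = (if i = j then 1 else 0)"
  shows "Re (\<Sum>c\<in>{..<m} \<times> ({..<d} \<times> {..<d}). cnj (vb d (\<lambda>i j. M1 i j - M2 i j) W c) * vb d (\<lambda>i j. M1 i j - M2 i j) W c)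
     \<le> (\<Sum>r<m. \<Sum>c\<in>{..<d} \<times> {..<d}. (cmod (W c r))^2)"
proof -
  have "Re (\<Sum>c\<in>{..<m} \<times> ({..<d} \<times> {..<d}). cnj (vb d (\<lambda>i j. M1 i j - M2 i j) W c) * vb d (\<lambda>i j. M1 i j - M2 i j) W c)
    = (\<Sum>r<m. \<Sum>i<d. \<Sum>l<d. (cmod (\<Sum>j<d. (M1 l j - M2 l j) * W (i, j) r))^2)"
    unfolding re_sum_sq unfolding sum_pair vb_def by (simp only: prod.case)
  also have "\<dots> \<le> (\<Sum>r<m. \<Sum>i<d. \<Sum>l<d. (cmod (W (i, l) r))^2)"
    by (intro sum_mono contraction[OF _ p1 p2]) (auto simp: id)
  also have "\<dots> = (\<Sum>r<m. \<Sum>c\<in>{..<d} \<times> {..<d}. (cmod (W c r))^2)"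
    unfolding sum_pair ..
  finally show ?thesis .
qed

lemma trW:
  fixes W :: "nat \<times> nat \<Rightarrow> nat \<Rightarrow> complex" and m d :: nat
  assumes rho: "\<forall>a\<in>{..<d} \<times> {..<d}. \<forall>b\<in>{..<d} \<times> {..<d}. \<rho> a b = (\<Sum>r<m. W a r * cnj (W b r))"
    and tr: "(\<Sum>c\<in>{..<d} \<times> {..<d}. \<rho> c c) = 1"
  shows "(\<Sum>r<m. \<Sum>c\<in>{..<d} \<times> {..<d}. (cmod (W c r))^2) = 1"
proof -
  have "1 = Re (\<Sum>c\<in>{..<d} \<times> {..<d}. \<rho> c c)" using tr by simp
  also have "\<dots> = Re (\<Sum>c\<in>{..<d} \<times> {..<d}. \<Sum>r<m. cnj (W c r) * W c r)"
  proof -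
    have "\<rho> c c = (\<Sum>r<m. cnj (W c r) * W c r)" if "c \<in> {..<d} \<times> {..<d}" for c
      using rho that by (cases c) (simp add: mult.commute)
    then show ?thesis by (metis (no_types, lifting) sum.cong)
  qed
  also have "\<dots> = (\<Sum>c\<in>{..<d} \<times> {..<d}. \<Sum>r<m. (cmod (W c r))^2)"
    unfolding Re_sum by (rule sum.cong[OF refl]) (simp only: re_sum_sq[symmetric] Re_sum)
  also have "\<dots> = (\<Sum>r<m. \<Sum>c\<in>{..<d} \<times> {..<d}. (cmod (W c r))^2)" by (rule sum.swap)
  finally show ?thesis by simp
qed

lemma trq_bilin:
  fixes F1 F2 G1 G2 :: "nat \<Rightarrow> nat \<Rightarrow> complex" and \<rho> :: "nat \<times> nat \<Rightarrow> nat \<times> nat \<Rightarrow> complex"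
  shows "(\<Sum>ik\<in>S. \<Sum>jl\<in>S. (F1 (fst ik) (fst jl) - F2 (fst ik) (fst jl)) * (G1 (snd ik) (snd jl) - G2 (snd ik) (snd jl)) * \<rho> jl ik)
   = (\<Sum>ik\<in>S. \<Sum>jl\<in>S. F1 (fst ik) (fst jl) * G1 (snd ik) (snd jl) * \<rho> jl ik)
   - (\<Sum>ik\<in>S. \<Sum>jl\<in>S. F1 (fst ik) (fst jl) * G2 (snd ik) (snd jl) * \<rho> jl ik)
   - (\<Sum>ik\<in>S. \<Sum>jl\<in>S. F2 (fst ik) (fst jl) * G1 (snd ik) (snd jl) * \<rho> jl ik)
   + (\<Sum>ik\<in>S. \<Sum>jl\<in>S. F2 (fst ik) (fst jl) * G2 (snd ik) (snd jl) * \<rho> jl ik)"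
proof -
  have "(\<Sum>ik\<in>S. \<Sum>jl\<in>S. (F1 (fst ik) (fst jl) - F2 (fst ik) (fst jl)) * (G1 (snd ik) (snd jl) - G2 (snd ik) (snd jl)) * \<rho> jl ik)
   = (\<Sum>ik\<in>S. \<Sum>jl\<in>S. F1 (fst ik) (fst jl) * G1 (snd ik) (snd jl) * \<rho> jl ik
     - F1 (fst ik) (fst jl) * G2 (snd ik) (snd jl) * \<rho> jl ik
     - F2 (fst ik) (fst jl) * G1 (snd ik) (snd jl) * \<rho> jl ik
     + F2 (fst ik) (fst jl) * G2 (snd ik) (snd jl) * \<rho> jl ik)"
    by (intro sum.cong refl) (simp add: algebra_simps)
  then show ?thesis by (simp add: sum_subtractf sum.distrib)
qed

lemma sum_pm1: "(\<Sum>a\<in>pm1. f a) = f (-1) + f 1"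
  by simp

theorem theorem4p12:
  fixes mA mB :: nat and p :: "int \<Rightarrow> int \<Rightarrow> nat \<Rightarrow> nat \<Rightarrow> real"
  assumes "quantum_behavior mA mB pm1 pm1 p"
    and "unbiased mA mB p"
  shows "gram_lorentz_behavior mA mB pm1 pm1 p"
proof -
  obtain d :: nat and \<rho> M N where d: "d \<ge> 1" and rpsd: "psd_on ({..<d} \<times> {..<d}) \<rho>"
    and tr: "(\<Sum>ik\<in>{..<d} \<times> {..<d}. \<rho> ik ik) = 1"
    and Mp: "\<forall>x<mA. (\<forall>a\<in>pm1. psd_on {..<d} (M x a)) \<and>
                 (\<forall>i<d. \<forall>j<d. (\<Sum>a\<in>pm1. M x a i j) = (if i = j then 1 else 0))"
    and Np: "\<forall>y<mB. (\<forall>b\<in>pm1. psd_on {..<d} (N y b)) \<and>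
                 (\<forall>i<d. \<forall>j<d. (\<Sum>b\<in>pm1. N y b i j) = (if i = j then 1 else 0))"
    and pr: "\<forall>a\<in>pm1. \<forall>b\<in>pm1. \<forall>x<mA. \<forall>y<mB.
           complex_of_real (p a b x y) =
             (\<Sum>ik\<in>{..<d} \<times> {..<d}. \<Sum>jl\<in>{..<d} \<times> {..<d}.
                M x a (fst ik) (fst jl) * N y b (snd ik) (snd jl) * \<rho> jl ik)"
    using assms(1) unfolding quantum_behavior_def
    apply (elim exE conjE)
    apply (rule that)
    apply assumption+
    done
  obtain m :: nat and W where W: "\<forall>a\<in>{..<d} \<times> {..<d}. \<forall>b\<in>{..<d} \<times> {..<d}. \<rho> a b = (\<Sum>k<m. W a k * cnj (W b k))"
    using psd_factor[OF _ rpsd] by blast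
  have trW1: "(\<Sum>r<m. \<Sum>c\<in>{..<d} \<times> {..<d}. (cmod (W c r))^2) = 1" by (rule trW[OF W tr])
  define g where "g i = (case i of Inl (x,a) \<Rightarrow> ua d (\<lambda>i j. M x 1 i j - M x (-1) i j) W
                                  | Inr (y,b) \<Rightarrow> vb d (\<lambda>i j. N y 1 i j - N y (-1) i j) W)" for i :: "(nat \<times> int) + (nat \<times> int)"
  define \<sigma> where "\<sigma> i = (case i of Inl (x,a) \<Rightarrow> real_of_int a | Inr (y,b) \<Rightarrow> real_of_int b)" for i :: "(nat \<times> int) + (nat \<times> int)"
  let ?I = "idx_set mA mB pm1 pm1"
  let ?P = "{..<m} \<times> ({..<d} \<times> {..<d})"
  have Mid: "M x 1 i j + M x (-1) i j = (if i = j then 1 else 0)" if "x < mA" "i < d" "j < d" for x i j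
    using Mp that by (simp add: add.commute)
  have Nid: "N y 1 i j + N y (-1) i j = (if i = j then 1 else 0)" if "y < mB" "i < d" "j < d" for y i j
    using Np that by (simp add: add.commute)
  have sig: "\<sigma> i * \<sigma> i = 1" if "i \<in> ?I" for i
    using that unfolding idx_set_def \<sigma>_def by auto
  have nrm: "Re (\<Sum>c\<in>?P. cnj (g i c) * g i c) \<le> 1" if iI: "i \<in> ?I" for i
  proof -
    consider (A) x a where "i = Inl (x,a)" "x < mA" | (B) y b where "i = Inr (y,b)" "y < mB"
      using iI unfolding idx_set_def by auto
    then show ?thesis
    proof cases
      case A
      then show ?thesis unfolding g_def using norm_ua[of d "M x 1" "M x (-1)" W m] Mp Mid trW1 by auto
    next
      case B
      then show ?thesis unfolding g_def using norm_vb[of d "N y 1" "N y (-1)" W m] Np Nid trW1 by auto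
    qed
  qed
  obtain m' V where V: "m' \<ge> 1" "\<forall>i\<in>?I. V i \<in> lorentz_cone m'"
    "\<forall>i\<in>?I. \<forall>j\<in>?I. (\<Sum>k<m'. V i k * V j k) = 1/4 + \<sigma> i * \<sigma> j / 4 * Re (\<Sum>c\<in>?P. cnj (g i c) * g j c)"
    using gram_construct[of ?P ?I \<sigma> g] sig nrm by auto
  define R where "R i j = (\<Sum>k<m'. V i k * V j k)" for i j
  have gl: "gram_lorentz ?I R" unfolding gram_lorentz_def R_def using V by blast
  define Ax where "Ax x = (\<lambda>i j. M x 1 i j - M x (-1) i j)" for x
  define By where "By y = (\<lambda>i j. N y 1 i j - N y (-1) i j)" for y
  have gL: "g (Inl (x,a)) = ua d (Ax x) W" for x a unfolding g_def Ax_def by simp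
  have gR: "g (Inr (y,b)) = vb d (By y) W" for y b unfolding g_def By_def by simp
  have inL: "Inl (x,a) \<in> ?I" if "x < mA" "a \<in> pm1" for x a using that unfolding idx_set_def by auto
  have inR: "Inr (y,b) \<in> ?I" if "y < mB" "b \<in> pm1" for y b using that unfolding idx_set_def by auto
  have Rg: "R i j = 1/4 + \<sigma> i * \<sigma> j / 4 * Re (\<Sum>c\<in>?P. cnj (g i c) * g j c)" if "i \<in> ?I" "j \<in> ?I" for i j
    using V(3) that unfolding R_def by blast
  have RLL: "R (Inl (x,a)) (Inl (x',a')) = 1/4 + of_int a * of_int a' / 4 * Re (\<Sum>c\<in>?P. cnj (ua d (Ax x) W c) * ua d (Ax x') W c)"
    if "x < mA" "a \<in> pm1" "x' < mA" "a' \<in> pm1" for x a x' a'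
    unfolding Rg[OF inL[OF that(1,2)] inL[OF that(3,4)]] gL \<sigma>_def by simp
  have RRR: "R (Inr (y,b)) (Inr (y',b')) = 1/4 + of_int b * of_int b' / 4 * Re (\<Sum>c\<in>?P. cnj (vb d (By y) W c) * vb d (By y') W c)"
    if "y < mB" "b \<in> pm1" "y' < mB" "b' \<in> pm1" for y b y' b'
    unfolding Rg[OF inR[OF that(1,2)] inR[OF that(3,4)]] gR \<sigma>_def by simp
  have RLR: "R (Inl (x,a)) (Inr (y,b)) = 1/4 + of_int a * of_int b / 4 * Re (\<Sum>c\<in>?P. cnj (ua d (Ax x) W c) * vb d (By y) W c)"
    if "x < mA" "a \<in> pm1" "y < mB" "b \<in> pm1" for x a y b
    unfolding Rg[OF inL[OF that(1,2)] inR[OF that(3,4)]] gL gR \<sigma>_def by simp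
  have E: "Re (\<Sum>c\<in>?P. cnj (ua d (Ax x) W c) * vb d (By y) W c) = p 1 1 x y - p 1 (-1) x y - p (-1) 1 x y + p (-1) (-1) x y"
    if "x < mA" "y < mB" for x y
  proof -
    have herm: "Ax x i j = cnj (Ax x j i)" if "i < d" "j < d" for i j
      using psd_herm[of "{..<d}" "M x 1" i j] psd_herm[of "{..<d}" "M x (-1)" i j] Mp \<open>x < mA\<close> that
      unfolding Ax_def by auto
    have "(\<Sum>c\<in>?P. cnj (ua d (Ax x) W c) * vb d (By y) W c)
       = (\<Sum>ik\<in>{..<d} \<times> {..<d}. \<Sum>jl\<in>{..<d} \<times> {..<d}. Ax x (fst ik) (fst jl) * By y (snd ik) (snd jl) * \<rho> jl ik)"
      by (rule corr[OF W herm, symmetric])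
    also have "\<dots> = complex_of_real (p 1 1 x y - p 1 (-1) x y - p (-1) 1 x y + p (-1) (-1) x y)"
      unfolding Ax_def By_def trq_bilin using pr that by simp
    finally show ?thesis by simp
  qed
  have ub: "p a (-1) x y + p a 1 x y = 1/2" "p (-1) b x y + p 1 b x y = 1/2"
    if "x < mA" "y < mB" "a \<in> pm1" "b \<in> pm1" for x y a b
    using assms(2) that unfolding unbiased_def by auto
  have inA: "in_A mA mB pm1 pm1 p R"
    unfolding in_A_def
  proof (intro conjI allI impI ballI)
    fix i j assume "i \<in> ?I" "j \<in> ?I"
    show "R i j = R j i" unfolding R_def by (simp add: mult.commute)
  next
    fix x x' assume "x < mA" "x' < mA"
    then show "(\<Sum>a\<in>pm1. \<Sum>a'\<in>pm1. R (Inl (x, a)) (Inl (x', a'))) = 1"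
      by (simp add: RLL)
  next
    fix y y' assume "y < mB" "y' < mB"
    then show "(\<Sum>b\<in>pm1. \<Sum>b'\<in>pm1. R (Inr (y, b)) (Inr (y', b'))) = 1"
      by (simp add: RRR)
  next
    fix x y assume "x < mA" "y < mB"
    then show "(\<Sum>a\<in>pm1. \<Sum>b\<in>pm1. R (Inl (x, a)) (Inr (y, b))) = 1"
      by (simp add: RLR)
  next
    fix a b x y assume ab: "a \<in> pm1" "b \<in> pm1" and xy: "x < mA" "y < mB"
    have u: "p 1 (-1) x y + p 1 1 x y = 1/2" "p (-1) (-1) x y + p (-1) 1 x y = 1/2"
      "p (-1) 1 x y + p 1 1 x y = 1/2" "p (-1) (-1) x y + p 1 (-1) x y = 1/2"
      using ub[OF xy] by auto
    have ha: "a = -1 \<or> a = 1" and hb: "b = -1 \<or> b = 1" using ab by auto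
    show "R (Inl (x, a)) (Inr (y, b)) = p a b x y"
      unfolding RLR[OF xy(1) ab(1) xy(2) ab(2)] E[OF xy]
      using ha hb
      apply (elim disjE)
      apply simp_all
      apply (insert u)
      apply (simp_all add: field_simps)
      done
  qed
  show ?thesis unfolding gram_lorentz_behavior_def using assms(1) gl inA by blast
qed

end
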